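(* Assume the disturbance satisfies $\|\dot d(t)\|\le \xi_d$ for all $t\ge 0$. Let $C_1,C_2,\beta>0$, let $e_1=\hat F_1-\omega_e$, $e_2=\hat F_2-J^{-1}d$, and $\varepsilon=[\beta e_1^{T},e_2^{T}]^{T}\in\mathbb R^6$. Then there exist a symmetric positive definite matrix $Q_2\in\mathbb R^{6\times 6}$ and constants $C_d>0$, $h_m\ge 0$ such that $V_\varepsilon=\varepsilon^TQ_2\varepsilon$ satisfies $\dot V_\varepsilon\le -C_dV_\varepsilon+h_m$ along solutions. Consequently $\varepsilon$ converges exponentially into a compact set (it is uniformly ultimately bounded), and the disturbance estimation error $\tilde d=d-\hat d$ is bounded on $[0,\infty)$ and uniformly ultimately bounded, with ultimate bound of the form $\|\tilde d\|\le \lambda_{J\max}\sqrt{h_m/(\chi C_d\lambda_{Q\min})}$ for any $\chi\in(0,1)$, where $\lambda_{Q\min}$ is the smallest eigenvalue of $Q_2$.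
   Context: Attitude error dynamics: $\dot q_{ev}=F_e\omega_e$, $\dot q_{e0}=-\tfrac12 q_{ev}^T\omega_e$, $J\dot\omega_e=\Omega_e+u+d$, where $(q_{ev},q_{e0})\in\mathbb R^3\times\mathbb R$ is a unit quaternion, $\omega_e\in\mathbb R^3$, $F_e=\tfrac12(q_{e0}I_3+q_{ev}^\times)$ with $a^\times$ the skew-symmetric cross-product matrix of $a$, $J\in\mathbb R^{3\times3}$ is a known symmetric positive definite matrix with smallest/largest eigenvalues $\lambda_{J\min},\lambda_{J\max}$, $\Omega_e(t)\in\mathbb R^3$ is a known signal, $u(t)\in\mathbb R^3$ is the control input and $d(t)\in\mathbb R^3$ is an unknown bounded disturbance. Disturbance observer: with $F_d=J^{-1}\Omega_e$, the observer states $\hat F_1,\hat F_2\in\mathbb R^3$ evolve by $\dot{\hat F}_1=F_d+J^{-1}u+\hat F_2-C_1\beta e_1$, $\dot{\hat F}_2=-C_2\beta^2e_1$, where $e_1=\hat F_1-\omega_e$; the disturbance estimate is $\hat d=J\hat F_2$. *)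

theory Defs
  imports "HOL-Analysis.Analysis" "HOL-Library.Numeral_Type"
begin

text \<open>Skew-symmetric cross-product matrix: skew a *v b = a x b.\<close>
definition skew :: "real^3 \<Rightarrow> real^3^3" where
  "skew a = vector [vector [0, - a$3, a$2],
                    vector [a$3, 0, - a$1],
                    vector [- a$2, a$1, 0]]"

text \<open>F_e = 1/2 (q_e0 I_3 + q_ev^x).\<close>
definition Fe :: "real^3 \<Rightarrow> real \<Rightarrow> real^3^3" where
  "Fe qv q0 = (1/2) *\<^sub>R (q0 *\<^sub>R mat 1 + skew qv)"

definition sym_pos_def :: "real^'n^'n \<Rightarrow> bool" where
  "sym_pos_def A \<longleftrightarrow> transpose A = A \<and> (\<forall>x. x \<noteq> 0 \<longrightarrow> x \<bullet> (A *v x) > 0)"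

definition mat_eigenvalues :: "real^'n^'n \<Rightarrow> real set" where
  "mat_eigenvalues A = {l. \<exists>v. v \<noteq> 0 \<and> A *v v = l *\<^sub>R v}"

definition lambda_min :: "real^'n^'n \<Rightarrow> real" where
  "lambda_min A = Min (mat_eigenvalues A)"

definition lambda_max :: "real^'n^'n \<Rightarrow> real" where
  "lambda_max A = Max (mat_eigenvalues A)"

text \<open>Stacked error vector eps = [beta e1; e2] in R^6, indexed by 3 + 3.\<close>
definition stack :: "real \<Rightarrow> real^3 \<Rightarrow> real^3 \<Rightarrow> real^(3+3)" where
  "stack \<beta> e1 e2 = (\<chi> i. case i of Inl k \<Rightarrow> \<beta> * e1 $ k | Inr k \<Rightarrow> e2 $ k)"

end

theory Submission
  imports Defs "HOL-Real_Asymp.Real_Asymp" "HOL-Computational_Algebra.Polynomial"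
begin


lemma mat_mv: "(mat l :: real^'n^'n) *v v = l *\<^sub>R v"
proof -
  have "\<And>i. (\<Sum>j\<in>UNIV. v $ j * (if i = j then l else 0)) = (\<Sum>j\<in>UNIV. if i = j then v$j * l else 0)"
    by (rule sum.cong) auto
  thus ?thesis by (simp add: vec_eq_iff matrix_vector_mult_def mat_def algebra_simps)
qed

lemma mat_sub_mv: "((A::real^'n^'n) - mat l) *v v = A *v v - l *\<^sub>R v"
  by (simp add: matrix_vector_mult_diff_rdistrib mat_mv)

lemma eig_det: "l \<in> mat_eigenvalues (A::real^'n^'n) \<Longrightarrow> det (A - mat l) = 0"
proof -
  assume "l \<in> mat_eigenvalues A"
  then obtain v where v: "v \<noteq> 0" "A *v v = l *\<^sub>R v" by (auto simp: mat_eigenvalues_def)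
  have "(A - mat l) *v v = (A - mat l) *v 0" using v by (simp add: mat_sub_mv)
  hence "\<not> inj ((*v) (A - mat l))" using v unfolding inj_def by blast
  hence "\<not> invertible (A - mat l)" using inj_matrix_vector_mult by blast
  thus ?thesis by (simp add: invertible_det_nz)
qed

lemma det_eig: "det ((A::real^'n^'n) - mat l) = 0 \<Longrightarrow> l \<in> mat_eigenvalues A"
proof -
  assume "det (A - mat l) = 0"
  hence "\<not> inj ((*v) (A - mat l))"
    by (metis invertible_det_nz invertible_left_inverse matrix_left_invertible_injective)
  then obtain x y where xy: "x \<noteq> y" "(A - mat l) *v x = (A - mat l) *v y" unfolding inj_def by blast
  hence "A *v (x - y) = l *\<^sub>R (x - y)"
    by (simp add: mat_sub_mv mat_mv matrix_vector_mult_diff_distrib algebra_simps)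
  thus ?thesis using xy unfolding mat_eigenvalues_def by (intro CollectI exI[of _ "x-y"]) auto
qed

lemma det3_poly: "det ((A::real^3^3) - mat l) = poly [:det A, -(A$1$1*A$2$2 + A$1$1*A$3$3 + A$2$2*A$3$3 - A$1$2*A$2$1 - A$1$3*A$3$1 - A$2$3*A$3$2), A$1$1+A$2$2+A$3$3, -1:] l"
  by (simp add: det_3 mat_def algebra_simps)

lemma eig3_finite: "finite (mat_eigenvalues (A::real^3^3))"
proof -
  let ?P = "[:det A, -(A$1$1*A$2$2 + A$1$1*A$3$3 + A$2$2*A$3$3 - A$1$2*A$2$1 - A$1$3*A$3$1 - A$2$3*A$3$2), A$1$1+A$2$2+A$3$3, -1:]"
  have "?P \<noteq> 0" by simp
  hence "finite {x. poly ?P x = 0}" by (rule poly_roots_finite)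
  moreover have "mat_eigenvalues A \<subseteq> {x. poly ?P x = 0}"
    by (auto dest!: eig_det simp: det3_poly)
  ultimately show ?thesis by (rule rev_finite_subset)
qed

lemma eig3_ne: "mat_eigenvalues (A::real^3^3) \<noteq> {}"
proof -
  define a where "a = A$1$1+A$2$2+A$3$3"
  define b where "b = -(A$1$1*A$2$2 + A$1$1*A$3$3 + A$2$2*A$3$3 - A$1$2*A$2$1 - A$1$3*A$3$1 - A$2$3*A$3$2)"
  define c where "c = det A"
  have f: "\<And>l. det (A - mat l) = c + b*l + a*l^2 - l^3"
    by (simp add: det3_poly a_def b_def c_def algebra_simps power2_eq_square power3_eq_cube)
  have "filterlim (\<lambda>l. c + b*l + a*l^2 - l^3) at_bot at_top" by real_asymp
  hence "eventually (\<lambda>l. c + b*l + a*l^2 - l^3 < 0) at_top"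
    unfolding filterlim_at_bot_dense by blast
  then obtain L1 where L1: "\<And>l. l \<ge> L1 \<Longrightarrow> c + b*l + a*l^2 - l^3 < 0"
    by (auto simp: eventually_at_top_linorder)
  have "filterlim (\<lambda>l. c + b*l + a*l^2 - l^3) at_top at_bot" by real_asymp
  hence "eventually (\<lambda>l. c + b*l + a*l^2 - l^3 > 0) at_bot"
    unfolding filterlim_at_top_dense by blast
  then obtain L2 where L2: "\<And>l. l \<le> L2 \<Longrightarrow> c + b*l + a*l^2 - l^3 > 0"
    by (auto simp: eventually_at_bot_linorder)
  define lo where "lo = min L2 L1" define hi where "hi = max L1 L2"
  have "\<exists>x\<ge>lo. x \<le> hi \<and> c + b*x + a*x^2 - x^3 = 0"
    apply (rule IVT2')
    using L1[of hi] L2[of lo] by (auto simp: lo_def hi_def intro!: continuous_intros less_imp_le)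
  then obtain x where "c + b*x + a*x^2 - x^3 = 0" by blast
  hence "x \<in> mat_eigenvalues A" using f det_eig by metis
  thus ?thesis by blast
qed


lemma sum_UNIV_plus: "sum (g :: 'a::finite + 'b::finite \<Rightarrow> real) UNIV = (\<Sum>k\<in>UNIV. g (Inl k)) + (\<Sum>k\<in>UNIV. g (Inr k))"
  using sum.Plus[of "UNIV::'a set" "UNIV :: 'b set" g] by (simp add: o_def)

definition mk :: "real^'a::finite \<Rightarrow> real^'b::finite \<Rightarrow> real^('a+'b)" where
  "mk x y = (\<chi> i. case i of Inl k \<Rightarrow> x $ k | Inr k \<Rightarrow> y $ k)"

definition Qm :: "real \<Rightarrow> real \<Rightarrow> real \<Rightarrow> real^('a::finite+'a)^('a+'a)" where
  "Qm p r q = (\<chi> i j. case i of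
      Inl a \<Rightarrow> (case j of Inl b \<Rightarrow> if a = b then p else 0 | Inr b \<Rightarrow> if a = b then r else 0)
    | Inr a \<Rightarrow> (case j of Inl b \<Rightarrow> if a = b then r else 0 | Inr b \<Rightarrow> if a = b then q else 0))"

lemma stack_mk: "stack \<beta> x y = mk (\<beta> *\<^sub>R x) y"
  by (simp add: stack_def mk_def vec_eq_iff split: sum.split)

lemma mk_nth1 [simp]: "mk x y $ Inl k = x $ k"
  by (simp add: mk_def)
lemma mk_nth2 [simp]: "mk x y $ Inr k = y $ k"
  by (simp add: mk_def)

lemma mk_inner: "mk (a::real^'a::finite) (b::real^'b::finite) \<bullet> mk c d = a \<bullet> c + b \<bullet> d"
  by (simp add: inner_vec_def sum_UNIV_plus)

lemma mk_split: "(z :: real^('a::finite+'b::finite)) = mk (\<chi> k. z $ Inl k) (\<chi> k. z $ Inr k)"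
  by (simp add: vec_eq_iff mk_def split: sum.split)

lemma mk_eq0: "mk x y = 0 \<longleftrightarrow> x = 0 \<and> y = 0"
  by (auto simp: vec_eq_iff mk_def split: sum.split)

lemma mk_scale: "l *\<^sub>R mk x y = mk (l *\<^sub>R x) (l *\<^sub>R y)"
  by (simp add: vec_eq_iff mk_def split: sum.split)

lemma mk_eq: "mk x y = mk a b \<longleftrightarrow> x = a \<and> y = b"
  by (auto simp: vec_eq_iff mk_def split: sum.split)

lemma sum_if_eq: "(\<Sum>k\<in>UNIV. (if a = k then c else 0) * (x::real^'a::finite) $ k) = c * x $ a"
proof -
  have "(\<Sum>k\<in>UNIV. (if a = k then c else 0) * x $ k) = (\<Sum>k\<in>UNIV. if a = k then c * x$k else 0)"
    by (rule sum.cong) auto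
  thus ?thesis by simp
qed

lemma Qm_mv: "(Qm p r q :: real^('a::finite+'a)^('a+'a)) *v mk x y = mk (p *\<^sub>R x + r *\<^sub>R y) (r *\<^sub>R x + q *\<^sub>R y)"
proof -
  have "((Qm p r q :: real^('a::finite+'a)^('a+'a)) *v mk x y) $ i = mk (p *\<^sub>R x + r *\<^sub>R y) (r *\<^sub>R x + q *\<^sub>R y) $ i" for i
    by (cases i) (simp_all add: matrix_vector_mult_def Qm_def sum_UNIV_plus sum_if_eq)
  thus ?thesis by (simp add: vec_eq_iff)
qed

lemma Qm_transpose: "transpose (Qm p r q :: real^('a::finite+'a)^('a+'a)) = Qm p r q"
  by (auto simp: vec_eq_iff transpose_def Qm_def split: sum.split)

lemma Qm_form: "mk x y \<bullet> ((Qm p r q :: real^('a::finite+'a)^('a+'a)) *v mk x y) = p * (x \<bullet> x) + 2 * r * (x \<bullet> y) + q * (y \<bullet> y)"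
  by (simp add: Qm_mv mk_inner inner_add_right inner_commute algebra_simps)



lemma eig_pos: "sym_pos_def (A::real^'n^'n) \<Longrightarrow> l \<in> mat_eigenvalues A \<Longrightarrow> l > 0"
proof -
  assume A: "sym_pos_def A" and l: "l \<in> mat_eigenvalues A"
  then obtain v where v: "v \<noteq> 0" "A *v v = l *\<^sub>R v" by (auto simp: mat_eigenvalues_def)
  have "v \<bullet> (A *v v) > 0" using A v by (auto simp: sym_pos_def_def)
  hence "l * (v \<bullet> v) > 0" using v by simp
  moreover have "v \<bullet> v > 0" using v by simp
  ultimately show ?thesis by (simp add: zero_less_mult_iff)
qed

lemma form_lower:
  fixes x y :: "real^'a::finite"
  assumes p: "p > 0" and q: "q > 0" and pq: "p * q \<ge> 4"
  shows "mk x y \<bullet> ((Qm p (-1) q :: real^('a+'a)^('a+'a)) *v mk x y) \<ge> (min p q / 2) * (x \<bullet> x + y \<bullet> y)"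
proof -
  define a where "a = norm x" define b where "b = norm y"
  have xx: "x \<bullet> x = a^2" "y \<bullet> y = b^2" by (simp_all add: a_def b_def power2_norm_eq_inner)
  have xy: "x \<bullet> y \<le> a * b" by (simp add: a_def b_def norm_cauchy_schwarz)
  have sq: "0 \<le> (p*a - 2*b)^2" by simp
  hence "4*p*a*b \<le> p^2*a^2 + 4*b^2" by (simp add: power2_eq_square algebra_simps)
  hence "2*a*b \<le> (p/2)*a^2 + (2/p)*b^2" using p
    by (simp add: divide_simps) (simp add: algebra_simps power2_eq_square)
  moreover have h: "2/p \<le> q/2" using p pq by (simp add: field_simps)
  have "(2/p)*b^2 \<le> (q/2)*b^2" using mult_right_mono[OF h, of "b^2"] by simp
  moreover note h
  moreover have "(min p q / 2) * a^2 \<le> (p/2)*a^2" "(min p q / 2) * b^2 \<le> (q/2)*b^2"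
    by (simp_all add: mult_right_mono)
  ultimately show ?thesis using xy xx by (simp add: Qm_form algebra_simps)
qed

lemma form_upper:
  fixes x y :: "real^'a::finite"
  assumes p: "p > 0" and q: "q > 0"
  shows "mk x y \<bullet> ((Qm p (-1) q :: real^('a+'a)^('a+'a)) *v mk x y) \<le> (p + q + 2) * (x \<bullet> x + y \<bullet> y)"
proof -
  have "0 \<le> (x + y) \<bullet> (x + y)" by simp
  hence "- 2 * (x \<bullet> y) \<le> x \<bullet> x + y \<bullet> y" by (simp add: inner_add_left inner_add_right inner_commute)
  moreover have "0 \<le> x \<bullet> x" "0 \<le> y \<bullet> y" by simp_all
  moreover have "0 \<le> q * (x \<bullet> x)" "0 \<le> p * (y \<bullet> y)" using p q by simp_all
  moreover have "(p+q+2)*(x\<bullet>x + y\<bullet>y) = p*(x\<bullet>x) + q*(x\<bullet>x) + 2*(x\<bullet>x) + p*(y\<bullet>y) + q*(y\<bullet>y) + 2*(y\<bullet>y)"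
    by (simp add: algebra_simps)
  ultimately show ?thesis unfolding Qm_form by linarith
qed

lemma Qm_spd:
  assumes p: "p > 0" and q: "q > 0" and pq: "p * q \<ge> 4"
  shows "sym_pos_def (Qm p (-1) q :: real^('a::finite+'a)^('a+'a))"
  unfolding sym_pos_def_def
proof (intro conjI allI impI)
  show "transpose (Qm p (-1) q :: real^('a::finite+'a)^('a+'a)) = Qm p (-1) q" by (rule Qm_transpose)
  fix z :: "real^('a+'a)" assume "z \<noteq> 0"
  define x where "x = (\<chi> k. z $ Inl k)" define y where "y = (\<chi> k. z $ Inr k)"
  have z: "z = mk x y" unfolding x_def y_def by (rule mk_split)
  hence "x \<noteq> 0 \<or> y \<noteq> 0" using \<open>z \<noteq> 0\<close> mk_eq0 by blast
  hence "x \<bullet> x + y \<bullet> y > 0" by (metis add_nonneg_pos add_pos_nonneg inner_ge_zero inner_gt_zero_iff)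
  moreover have "min p q / 2 > 0" using p q by simp
  ultimately have "(min p q / 2) * (x \<bullet> x + y \<bullet> y) > 0" by simp
  thus "z \<bullet> (Qm p (-1) q *v z) > 0" using form_lower[OF p q pq, of x y] z by simp
qed

lemma Qm_eig_char:
  assumes "l \<in> mat_eigenvalues (Qm p (-1) q :: real^('a::finite+'a)^('a+'a))"
  shows "(l - p) * (l - q) = 1"
proof -
  obtain z :: "real^('a+'a)" where z: "z \<noteq> 0" "Qm p (-1) q *v z = l *\<^sub>R z"
    using assms by (auto simp: mat_eigenvalues_def)
  define x where "x = (\<chi> k. z $ Inl k)" define y where "y = (\<chi> k. z $ Inr k)"
  have zz: "z = mk x y" unfolding x_def y_def by (rule mk_split)
  hence xy: "x \<noteq> 0 \<or> y \<noteq> 0" using z mk_eq0 by blast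
  from z(2) have "p *\<^sub>R x - y = l *\<^sub>R x" "- x + q *\<^sub>R y = l *\<^sub>R y"
    unfolding zz Qm_mv mk_scale mk_eq by auto
  hence e1: "y = (p - l) *\<^sub>R x" and e2: "x = (q - l) *\<^sub>R y" by (auto simp: algebra_simps)
  have "x = ((q - l) * (p - l)) *\<^sub>R x" using e1 e2 by (metis scaleR_scaleR)
  moreover have "y = ((p - l) * (q - l)) *\<^sub>R y" using e1 e2 by (metis scaleR_scaleR)
  ultimately have "(q - l) * (p - l) = 1"
    using xy by (metis scaleR_cancel_right scaleR_one mult.commute)
  thus ?thesis by (simp add: algebra_simps)
qed

lemma Qm_eig:
  assumes p: "p > 0" and q: "q > 0" and pq: "p * q \<ge> 4"
  shows "lambda_min (Qm p (-1) q :: real^(3+3)^(3+3)) > 0"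
    "lambda_min (Qm p (-1) q :: real^(3+3)^(3+3)) \<le> (p + q) / 2"
proof -
  let ?Q = "Qm p (-1) q :: real^(3+3)^(3+3)"
  let ?P = "[:p*q - 1, -(p+q), 1:]"
  have "?P \<noteq> 0" by simp
  hence "finite {x. poly ?P x = 0}" by (rule poly_roots_finite)
  moreover have "mat_eigenvalues ?Q \<subseteq> {x. poly ?P x = 0}"
  proof
    fix l assume "l \<in> mat_eigenvalues ?Q"
    from Qm_eig_char[OF this] show "l \<in> {x. poly ?P x = 0}" by (simp add: algebra_simps)
  qed
  ultimately have fin: "finite (mat_eigenvalues ?Q)" by (rule rev_finite_subset)
  define s where "s = sqrt ((p - q)^2 + 4)"
  have s2: "s^2 = (p-q)^2 + 4" unfolding s_def by simp
  define \<mu> where "\<mu> = ((p + q) - s) / 2"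
  have mu1: "(\<mu> - p) * (\<mu> - q) = 1" unfolding \<mu>_def using s2
    by (simp add: field_simps power2_eq_square)
  define e :: "real^3" where "e = axis 1 1"
  have e0: "e \<noteq> 0" by (simp add: e_def)
  have "?Q *v mk e ((p - \<mu>) *\<^sub>R e) = \<mu> *\<^sub>R mk e ((p - \<mu>) *\<^sub>R e)"
  proof -
    have sc: "-1 + q*(p-\<mu>) = \<mu>*(p-\<mu>)" using mu1 by (simp add: algebra_simps)
    have "(-1) *\<^sub>R e + q *\<^sub>R ((p-\<mu>) *\<^sub>R e) = (-1 + q*(p-\<mu>)) *\<^sub>R e" by (simp add: algebra_simps)
    also have "\<dots> = \<mu> *\<^sub>R ((p-\<mu>) *\<^sub>R e)" unfolding sc by simp
    finally have "(-1) *\<^sub>R e + q *\<^sub>R ((p-\<mu>) *\<^sub>R e) = \<mu> *\<^sub>R ((p-\<mu>) *\<^sub>R e)" .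
    moreover have "p *\<^sub>R e + (-1) *\<^sub>R ((p-\<mu>) *\<^sub>R e) = \<mu> *\<^sub>R e" by (simp add: algebra_simps)
    ultimately show ?thesis unfolding Qm_mv mk_scale mk_eq by simp
  qed
  moreover have "mk e ((p - \<mu>) *\<^sub>R e) \<noteq> 0" using e0 mk_eq0 by blast
  ultimately have mu: "\<mu> \<in> mat_eigenvalues ?Q" unfolding mat_eigenvalues_def by blast
  hence ne: "mat_eigenvalues ?Q \<noteq> {}" by blast
  have inset: "lambda_min ?Q \<in> mat_eigenvalues ?Q" unfolding lambda_min_def using fin ne by (rule Min_in)
  show "lambda_min ?Q > 0" using eig_pos[OF Qm_spd[OF p q pq] inset] .
  have "lambda_min ?Q \<le> \<mu>" unfolding lambda_min_def using fin mu by (rule Min_le)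
  also have "\<mu> \<le> (p + q) / 2" unfolding \<mu>_def s_def by simp
  finally show "lambda_min ?Q \<le> (p + q) / 2" .
qed

lemma J_eig: "sym_pos_def (J::real^3^3) \<Longrightarrow> lambda_max J > 0"
proof -
  assume J: "sym_pos_def J"
  have "lambda_max J \<in> mat_eigenvalues J" unfolding lambda_max_def
    by (rule Max_in[OF eig3_finite eig3_ne])
  thus ?thesis using eig_pos[OF J] by blast
qed


lemma comparison:
  fixes V :: "real \<Rightarrow> real"
  assumes Cd: "Cd > 0"
    and D: "\<forall>t\<ge>0. \<exists>V'. (V has_real_derivative V') (at t within {0..}) \<and> V' \<le> - Cd * V t + h"
    and t: "t \<ge> 0"
  shows "V t \<le> V 0 * exp (- Cd * t) + h / Cd * (1 - exp (- Cd * t))"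
proof -
  define W where "W s = (V s - h / Cd) * exp (Cd * s)" for s
  have dW: "\<exists>y. (W has_real_derivative y) (at s within {0..}) \<and> y \<le> 0" if s: "s \<ge> 0" for s
  proof -
    obtain V' where V': "(V has_real_derivative V') (at s within {0..})" "V' \<le> - Cd * V s + h"
      using D s by blast
    have "(W has_real_derivative (V' * exp (Cd * s) + (V s - h / Cd) * (exp (Cd * s) * Cd))) (at s within {0..})"
      unfolding W_def by (auto intro!: derivative_eq_intros V'(1))
    moreover have "V' * exp (Cd * s) + (V s - h / Cd) * (exp (Cd * s) * Cd) = (V' + Cd * V s - h) * exp (Cd * s)"
      using Cd by (simp add: field_simps)
    moreover have "(V' + Cd * V s - h) * exp (Cd * s) \<le> 0"
      using V'(2) by (simp add: mult_nonpos_nonneg)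
    ultimately show ?thesis by auto
  qed
  have "W t \<le> W 0"
  proof (rule DERIV_nonpos_imp_decreasing_open[OF t])
    fix x assume x: "0 < x" "x < t"
    hence "at x within {0..} = at x" by (intro at_within_interior) simp
    thus "\<exists>y. DERIV W x :> y \<and> y \<le> 0" using dW[of x] x by auto
  next
    show "continuous_on {0..t} W"
      unfolding continuous_on_eq_continuous_within
    proof
      fix x assume "x \<in> {0..t}"
      then obtain y where "(W has_real_derivative y) (at x within {0..})" using dW by auto
      hence "continuous (at x within {0..}) W" by (rule DERIV_continuous)
      thus "continuous (at x within {0..t}) W" by (rule continuous_within_subset) auto
    qed
  qed
  hence "(V t - h / Cd) * exp (Cd * t) \<le> V 0 - h / Cd" by (simp add: W_def)
  hence "(V t - h / Cd) * exp (Cd * t) * exp (- Cd * t) \<le> (V 0 - h / Cd) * exp (- Cd * t)"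
    by (simp add: mult_right_mono)
  hence "V t - h / Cd \<le> (V 0 - h / Cd) * exp (- Cd * t)"
    by (simp add: mult.assoc exp_add[symmetric])
  thus ?thesis by (simp add: algebra_simps)
qed

lemma eventually_small:
  fixes V :: "real \<Rightarrow> real"
  assumes Cd: "Cd > 0" and h: "h > 0" and c: "0 < c" "c < 1"
    and B: "\<forall>t\<ge>0. V t \<le> V 0 * exp (- Cd * t) + h / Cd * (1 - exp (- Cd * t))"
  shows "\<exists>T\<ge>0. \<forall>t\<ge>T. V t \<le> h / (c * Cd)"
proof -
  define \<delta> where "\<delta> = h / (c * Cd) - h / Cd"
  have "h / Cd < h / (c * Cd)" using Cd h c by (simp add: field_simps)
  hence dpos: "\<delta> > 0" by (simp add: \<delta>_def)
  have "((\<lambda>t. V 0 * exp (- Cd * t)) \<longlongrightarrow> V 0 * 0) at_top"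
    by (intro tendsto_intros filterlim_compose[OF exp_at_bot] filterlim_tendsto_neg_mult_at_bot[OF tendsto_const] filterlim_ident) (use Cd in auto)
  hence "eventually (\<lambda>t. V 0 * exp (- Cd * t) < \<delta>) at_top" using dpos by (simp add: order_tendstoD)
  then obtain T where T: "\<And>t. t \<ge> T \<Longrightarrow> V 0 * exp (- Cd * t) < \<delta>" by (auto simp: eventually_at_top_linorder)
  show ?thesis
  proof (intro exI[of _ "max T 0"] conjI allI impI)
    fix t assume t: "max T 0 \<le> t"
    have "V t \<le> V 0 * exp (- Cd * t) + h / Cd * (1 - exp (- Cd * t))" using B t by auto
    also have "\<dots> \<le> V 0 * exp (- Cd * t) + h / Cd" using Cd h by (simp add: field_simps)
    also have "\<dots> \<le> h / (c * Cd)" using T[of t] t by (simp add: \<delta>_def)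
    finally show "V t \<le> h / (c * Cd)" .
  qed simp
qed


lemma young: fixes x y t :: real assumes t: "t > 0" shows "2*x*y \<le> t*x^2 + y^2/t"
proof -
  have "0 \<le> (t*x - y)^2 / t" using t by simp
  also have "(t*x - y)^2 / t = t*x^2 + y^2/t - 2*x*y" using t
    by (simp add: power2_eq_square field_simps)
  finally show ?thesis by simp
qed

lemma Vdot_bound:
  fixes e1 e2 g :: "real^3"
  assumes b: "\<beta> > 0" and k1: "k1 = p*C1 - C2" "k1 > 0" and qc: "q*C2 = p + C1"
    and q: "q > 0" and g: "norm g \<le> G"
  shows "p*(2*(e1 \<bullet> (\<beta> *\<^sub>R (e2 - C1 *\<^sub>R e1)))) - 2*(e1 \<bullet> (-(C2*\<beta>) *\<^sub>R e1 - g) + (\<beta> *\<^sub>R (e2 - C1 *\<^sub>R e1)) \<bullet> e2)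
     + q*(2*(e2 \<bullet> (-(C2*\<beta>) *\<^sub>R e1 - g))) \<le> -\<beta>*k1*(e1\<bullet>e1) - \<beta>*(e2\<bullet>e2) + (1/(\<beta>*k1) + q^2/\<beta>)*G^2"
proof -
  define a11 where "a11 = e1 \<bullet> e1" define a12 where "a12 = e1 \<bullet> e2" define a22 where "a22 = e2 \<bullet> e2"
  define b1 where "b1 = e1 \<bullet> g" define b2 where "b2 = e2 \<bullet> g"
  have "p*(2*(e1 \<bullet> (\<beta> *\<^sub>R (e2 - C1 *\<^sub>R e1)))) - 2*(e1 \<bullet> (-(C2*\<beta>) *\<^sub>R e1 - g) + (\<beta> *\<^sub>R (e2 - C1 *\<^sub>R e1)) \<bullet> e2)
     + q*(2*(e2 \<bullet> (-(C2*\<beta>) *\<^sub>R e1 - g)))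
     = 2*p*\<beta>*a12 - 2*p*\<beta>*C1*a11 + 2*C2*\<beta>*a11 + 2*b1 - 2*\<beta>*a22 + 2*\<beta>*C1*a12 - 2*(q*C2)*\<beta>*a12 - 2*q*b2"
    unfolding a11_def a12_def a22_def b1_def b2_def
    by (simp add: inner_diff_right inner_diff_left inner_commute algebra_simps)
  also have "\<dots> = -2*\<beta>*k1*a11 - 2*\<beta>*a22 + 2*b1 - 2*q*b2"
    unfolding qc k1(1) by (simp add: algebra_simps)
  finally have eq: "p*(2*(e1 \<bullet> (\<beta> *\<^sub>R (e2 - C1 *\<^sub>R e1)))) - 2*(e1 \<bullet> (-(C2*\<beta>) *\<^sub>R e1 - g) + (\<beta> *\<^sub>R (e2 - C1 *\<^sub>R e1)) \<bullet> e2)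
     + q*(2*(e2 \<bullet> (-(C2*\<beta>) *\<^sub>R e1 - g))) = -2*\<beta>*k1*a11 - 2*\<beta>*a22 + 2*b1 - 2*q*b2" .
  have a11: "a11 = norm e1 ^ 2" and a22: "a22 = norm e2 ^ 2" by (simp_all add: a11_def a22_def power2_norm_eq_inner)
  have s1: "2*b1 \<le> \<beta>*k1*a11 + G^2/(\<beta>*k1)"
  proof -
    have "b1 \<le> norm e1 * norm g" unfolding b1_def by (rule norm_cauchy_schwarz)
    hence "2*b1 \<le> 2*norm e1*norm g" by simp
    also have "\<dots> \<le> (\<beta>*k1)*norm e1^2 + norm g^2/(\<beta>*k1)" using b k1 by (intro young) simp
    also have "norm g^2/(\<beta>*k1) \<le> G^2/(\<beta>*k1)" using g b k1
      by (intro divide_right_mono power_mono) simp_all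
    finally show ?thesis unfolding a11 by simp
  qed
  have s2: "-2*q*b2 \<le> \<beta>*a22 + q^2*G^2/\<beta>"
  proof -
    have "- b2 \<le> norm e2 * norm g" unfolding b2_def
      by (metis abs_le_D2 Cauchy_Schwarz_ineq2)
    hence "2*q*(-b2) \<le> 2*q*(norm e2 * norm g)" using q by (intro mult_left_mono) simp_all
    hence "-2*q*b2 \<le> 2*norm e2*(q*norm g)" by (simp add: algebra_simps)
    also have "\<dots> \<le> \<beta>*norm e2^2 + (q*norm g)^2/\<beta>" using b by (intro young) simp
    also have "(q*norm g)^2/\<beta> \<le> q^2*G^2/\<beta>" using g b
      by (auto simp: power_mult_distrib intro!: divide_right_mono mult_left_mono power_mono)
    finally show ?thesis unfolding a22 by simp
  qed
  show ?thesis unfolding eq a11_def[symmetric] a22_def[symmetric] using s1 s2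
    by (simp add: algebra_simps add_divide_distrib)
qed
theorem mainTheorem2:
  fixes J :: "real^3^3" and C1 C2 \<beta> \<xi>d :: real
  assumes J: "sym_pos_def J"
    and C1: "C1 > 0" and C2: "C2 > 0" and beta: "\<beta> > 0"
  shows "\<exists>(Q2 :: real^(3+3)^(3+3)) Cd hm. sym_pos_def Q2 \<and> Cd > 0 \<and> hm \<ge> 0 \<and>
    (\<forall>(qv :: real \<Rightarrow> real^3) (q0 :: real \<Rightarrow> real) (w :: real \<Rightarrow> real^3) (wd :: real \<Rightarrow> real^3)
       (Om :: real \<Rightarrow> real^3) (u :: real \<Rightarrow> real^3) (d :: real \<Rightarrow> real^3) (dd :: real \<Rightarrow> real^3)
       (F1 :: real \<Rightarrow> real^3) (F2 :: real \<Rightarrow> real^3).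
      (\<forall>t\<ge>0. norm (qv t) ^ 2 + (q0 t) ^ 2 = 1) \<longrightarrow>
      (\<forall>t\<ge>0. (qv has_vector_derivative (Fe (qv t) (q0 t) *v w t)) (at t within {0..})) \<longrightarrow>
      (\<forall>t\<ge>0. (q0 has_real_derivative (- (1/2) * (qv t \<bullet> w t))) (at t within {0..})) \<longrightarrow>
      (\<forall>t\<ge>0. (w has_vector_derivative wd t) (at t within {0..}) \<and>
               J *v wd t = Om t + u t + d t) \<longrightarrow>
      (\<exists>D. \<forall>t\<ge>0. norm (d t) \<le> D) \<longrightarrow>
      (\<forall>t\<ge>0. (d has_vector_derivative dd t) (at t within {0..}) \<and> norm (dd t) \<le> \<xi>d) \<longrightarrow>
      (\<forall>t\<ge>0. (F1 has_vector_derivative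
                 (matrix_inv J *v Om t + matrix_inv J *v u t + F2 t
                   - (C1 * \<beta>) *\<^sub>R (F1 t - w t))) (at t within {0..})) \<longrightarrow>
      (\<forall>t\<ge>0. (F2 has_vector_derivative
                 (- (C2 * \<beta>^2) *\<^sub>R (F1 t - w t))) (at t within {0..})) \<longrightarrow>
      (let eps = (\<lambda>t. stack \<beta> (F1 t - w t) (F2 t - matrix_inv J *v d t));
           V = (\<lambda>t. eps t \<bullet> (Q2 *v eps t));
           dtil = (\<lambda>t. d t - J *v F2 t)
       in (\<forall>t\<ge>0. \<exists>V'. (V has_real_derivative V') (at t within {0..}) \<and> V' \<le> - Cd * V t + hm)
        \<and> (\<forall>t\<ge>0. V t \<le> V 0 * exp (- Cd * t) + hm / Cd * (1 - exp (- Cd * t)))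
        \<and> (\<forall>c. 0 < c \<and> c < 1 \<longrightarrow> (\<exists>T\<ge>0. \<forall>t\<ge>T. V t \<le> hm / (c * Cd)))
        \<and> (\<exists>B. \<forall>t\<ge>0. norm (dtil t) \<le> B)
        \<and> (\<forall>c. 0 < c \<and> c < 1 \<longrightarrow> (\<exists>T\<ge>0. \<forall>t\<ge>T.
              norm (dtil t) \<le> lambda_max J * sqrt (hm / (c * Cd * lambda_min Q2))))))"
proof -
  have Jinj: "inj ((*v) J)"
  proof (rule injI)
    fix x y assume "J *v x = J *v y"
    hence "J *v (x - y) = 0" by (simp add: matrix_vector_mult_diff_distrib)
    hence "(x - y) \<bullet> (J *v (x - y)) = 0" by simp
    thus "x = y" using J unfolding sym_pos_def_def by (metis eq_iff_diff_eq_0 less_irrefl)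
  qed
  hence "invertible J" by (simp add: invertible_left_inverse matrix_left_invertible_injective)
  hence inv: "J ** matrix_inv J = mat 1 \<and> matrix_inv J ** J = mat 1"
    unfolding invertible_def matrix_inv_def by (rule someI_ex)
  define Ji where "Ji = matrix_inv J"
  have JiJ: "Ji *v (J *v x) = x" for x using inv by (simp add: Ji_def matrix_vector_mul_assoc)
  have JJi: "J *v (Ji *v x) = x" for x using inv by (simp add: Ji_def matrix_vector_mul_assoc)
  obtain NJ where NJ: "NJ > 0" "\<And>x. norm (J *v x) \<le> norm x * NJ"
    using bounded_linear.pos_bounded[OF matrix_vector_mul_bounded_linear[of J]] by blast
  obtain NJi where NJi: "NJi > 0" "\<And>x. norm (Ji *v x) \<le> norm x * NJi"
    using bounded_linear.pos_bounded[OF matrix_vector_mul_bounded_linear[of Ji]] by blast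
  define LJ where "LJ = lambda_max J"
  have LJ: "LJ > 0" using J_eig[OF J] by (simp add: LJ_def)
  define p where "p = 2*C2/C1 + 2*C2 + 2"
  define q where "q = (p + C1)/C2"
  define k1 where "k1 = p*C1 - C2"
  have p0: "p > 0" unfolding p_def using C1 C2 by (simp add: add_pos_pos)
  have q0: "q > 0" unfolding q_def using p0 C1 C2 by simp
  have qc: "q*C2 = p + C1" unfolding q_def using C2 by simp
  have k1: "k1 > 0"
  proof -
    have "p*C1 = 2*C2 + (2*C2+2)*C1" unfolding p_def using C1 by (simp add: field_simps)
    thus ?thesis unfolding k1_def using C1 C2 by (smt (verit) mult_pos_pos)
  qed
  have pq: "p*q \<ge> 4"
  proof -
    have pge: "p \<ge> 2*C2 + 2" unfolding p_def using C1 C2 by simp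
    have qq: "q \<ge> p / C2" unfolding q_def using C1 C2 by (simp add: divide_right_mono)
    have A: "p*q \<ge> p*(p/C2)" using mult_left_mono[OF qq, of p] p0 by simp
    have B: "p*p \<ge> (2*C2+2)*(2*C2+2)" using pge C2 by (intro mult_mono) auto
    have "(2*C2+2)*(2*C2+2) = 4*(C2*C2) + 8*C2 + 4" by (simp add: algebra_simps)
    moreover have "C2*C2 \<ge> 0" by simp
    ultimately have "p*p \<ge> 4*C2" using B C2 by linarith
    hence "p*(p/C2) \<ge> 4" using C2 by (simp add: field_simps)
    thus ?thesis using A by simp
  qed
  define Q2 where "Q2 = (Qm p (-1) q :: real^(3+3)^(3+3))"
  define m where "m = min p q / 2"
  define M where "M = p + q + 2"
  define G where "G = NJi * \<bar>\<xi>d\<bar>"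
  define h0 where "h0 = (1/(\<beta>*k1) + q^2/\<beta>)*G^2 + 1"
  define mn where "mn = min k1 1"
  define Cd where "Cd = \<beta> * mn / M"
  define LQ where "LQ = lambda_min Q2"
  define U where "U = (p+q)/2"
  define K where "K = 1 + NJ^2 * U / (m * LJ^2)"
  define hm where "hm = K * h0"
  have m0: "m > 0" unfolding m_def using p0 q0 by simp
  have M0: "M > 0" unfolding M_def using p0 q0 by simp
  have mn0: "mn > 0" unfolding mn_def using k1 by simp
  have Cd0: "Cd > 0" unfolding Cd_def using beta mn0 M0 by simp
  have h00: "h0 > 0"
  proof -
    have "(1/(\<beta>*k1) + q^2/\<beta>)*G^2 \<ge> 0" using beta k1 by (intro mult_nonneg_nonneg add_nonneg_nonneg) auto
    thus ?thesis unfolding h0_def by linarith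
  qed
  have LQ: "LQ > 0" "LQ \<le> U" unfolding LQ_def Q2_def U_def using Qm_eig[OF p0 q0 pq] by auto
  have U0: "U > 0" unfolding U_def using p0 q0 by simp
  have K1: "K \<ge> 1" unfolding K_def using U0 m0 LJ by simp
  have hm0: "hm > 0" unfolding hm_def using K1 h00 by simp
  have hmh0: "h0 \<le> hm" unfolding hm_def using K1 h00 by simp
  have Q2spd: "sym_pos_def Q2" unfolding Q2_def by (rule Qm_spd[OF p0 q0 pq])
  show ?thesis
  proof (rule exI[of _ Q2], rule exI[of _ Cd], rule exI[of _ hm], intro conjI allI impI)
    show "sym_pos_def Q2" by (rule Q2spd)
    show "Cd > 0" by (rule Cd0)
    show "hm \<ge> 0" using hm0 by simp
    fix qv :: "real \<Rightarrow> real^3" and q0 :: "real \<Rightarrow> real" and w wd Om u d dd F1 F2 :: "real \<Rightarrow> real^3"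
    assume H4: "\<forall>t\<ge>0. (w has_vector_derivative wd t) (at t within {0..}) \<and> J *v wd t = Om t + u t + d t"
      and H6: "\<forall>t\<ge>0. (d has_vector_derivative dd t) (at t within {0..}) \<and> norm (dd t) \<le> \<xi>d"
      and H7: "\<forall>t\<ge>0. (F1 has_vector_derivative
                 (matrix_inv J *v Om t + matrix_inv J *v u t + F2 t
                   - (C1 * \<beta>) *\<^sub>R (F1 t - w t))) (at t within {0..})"
      and H8: "\<forall>t\<ge>0. (F2 has_vector_derivative
                 (- (C2 * \<beta>^2) *\<^sub>R (F1 t - w t))) (at t within {0..})"
    define e1 where "e1 t = \<beta> *\<^sub>R (F1 t - w t)" for t
    define e2 where "e2 t = F2 t - Ji *v d t" for t
    define Vf where "Vf t = p*(e1 t \<bullet> e1 t) + 2*(-1)*(e1 t \<bullet> e2 t) + q*(e2 t \<bullet> e2 t)" for t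
    have Vpt: "stack \<beta> (F1 t - w t) (F2 t - matrix_inv J *v d t) \<bullet> (Q2 *v stack \<beta> (F1 t - w t) (F2 t - matrix_inv J *v d t)) = Vf t" for t
      by (simp add: stack_mk Q2_def Qm_form Vf_def e1_def e2_def Ji_def)
    have Veq: "(\<lambda>t. stack \<beta> (F1 t - w t) (F2 t - matrix_inv J *v d t) \<bullet> (Q2 *v stack \<beta> (F1 t - w t) (F2 t - matrix_inv J *v d t))) = Vf"
      using Vpt by (simp add: fun_eq_iff)
    have dtil: "d t - J *v F2 t = - (J *v e2 t)" for t
      by (simp add: e2_def matrix_vector_mult_diff_distrib JJi)
    have lowV: "m * (e1 t \<bullet> e1 t + e2 t \<bullet> e2 t) \<le> Vf t" for t
      using form_lower[OF p0 q0 pq, of "e1 t" "e2 t"] unfolding Qm_form Vf_def m_def by simp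
    have upV: "Vf t \<le> M * (e1 t \<bullet> e1 t + e2 t \<bullet> e2 t)" for t
      using form_upper[OF p0 q0, of "e1 t" "e2 t"] unfolding Qm_form Vf_def M_def by simp
    have dV: "\<exists>V'. (Vf has_real_derivative V') (at t within {0..}) \<and> V' \<le> - Cd * Vf t + h0" if t: "t \<ge> 0" for t
    proof -
      define E1 where "E1 = \<beta> *\<^sub>R (e2 t - C1 *\<^sub>R e1 t)"
      define g where "g = Ji *v dd t"
      define E2 where "E2 = -(C2*\<beta>) *\<^sub>R e1 t - g"
      have wd: "wd t = Ji *v (Om t + u t + d t)" using H4 t JiJ by metis
      have de1: "(e1 has_vector_derivative E1) (at t within {0..})"
      proof -
        have "((\<lambda>t. F1 t - w t) has_vector_derivative
            (matrix_inv J *v Om t + matrix_inv J *v u t + F2 t - (C1 * \<beta>) *\<^sub>R (F1 t - w t) - wd t)) (at t within {0..})"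
          using H7 H4 t by (intro has_vector_derivative_diff) auto
        hence "((\<lambda>t. \<beta> *\<^sub>R (F1 t - w t)) has_vector_derivative
            \<beta> *\<^sub>R (matrix_inv J *v Om t + matrix_inv J *v u t + F2 t - (C1 * \<beta>) *\<^sub>R (F1 t - w t) - wd t)) (at t within {0..})"
          by (rule bounded_linear.has_vector_derivative[OF bounded_linear_scaleR_right])
        moreover have "\<beta> *\<^sub>R (matrix_inv J *v Om t + matrix_inv J *v u t + F2 t - (C1 * \<beta>) *\<^sub>R (F1 t - w t) - wd t) = E1"
          unfolding E1_def wd e1_def e2_def Ji_def by (simp add: matrix_vector_right_distrib algebra_simps)
        ultimately show ?thesis unfolding e1_def[abs_def] by simp
      qed
      have de2: "(e2 has_vector_derivative E2) (at t within {0..})"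
      proof -
        have "((\<lambda>t. Ji *v d t) has_vector_derivative Ji *v dd t) (at t within {0..})"
          using H6 t by (intro bounded_linear.has_vector_derivative[OF matrix_vector_mul_bounded_linear]) auto
        hence "((\<lambda>t. F2 t - Ji *v d t) has_vector_derivative (- (C2 * \<beta>^2) *\<^sub>R (F1 t - w t) - Ji *v dd t)) (at t within {0..})"
          using H8 t by (intro has_vector_derivative_diff) auto
        moreover have "- (C2 * \<beta>^2) *\<^sub>R (F1 t - w t) - Ji *v dd t = E2"
          unfolding E2_def g_def e1_def by (simp add: power2_eq_square algebra_simps)
        ultimately show ?thesis unfolding e2_def[abs_def] by simp
      qed
      have i11: "((\<lambda>x. e1 x \<bullet> e1 x) has_real_derivative (e1 t \<bullet> E1 + E1 \<bullet> e1 t)) (at t within {0..})"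
        unfolding has_real_derivative_iff_has_vector_derivative
        by (rule bounded_bilinear.has_vector_derivative[OF bounded_bilinear_inner de1 de1])
      have i12: "((\<lambda>x. e1 x \<bullet> e2 x) has_real_derivative (e1 t \<bullet> E2 + E1 \<bullet> e2 t)) (at t within {0..})"
        unfolding has_real_derivative_iff_has_vector_derivative
        by (rule bounded_bilinear.has_vector_derivative[OF bounded_bilinear_inner de1 de2])
      have i22: "((\<lambda>x. e2 x \<bullet> e2 x) has_real_derivative (e2 t \<bullet> E2 + E2 \<bullet> e2 t)) (at t within {0..})"
        unfolding has_real_derivative_iff_has_vector_derivative
        by (rule bounded_bilinear.has_vector_derivative[OF bounded_bilinear_inner de2 de2])
      define V' where "V' = p*(e1 t \<bullet> E1 + E1 \<bullet> e1 t) + 2*(-1)*(e1 t \<bullet> E2 + E1 \<bullet> e2 t) + q*(e2 t \<bullet> E2 + E2 \<bullet> e2 t)"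
      have "(Vf has_real_derivative V') (at t within {0..})"
        unfolding Vf_def[abs_def] V'_def
        by (intro DERIV_add DERIV_cmult i11 i12 i22)
      moreover have "V' \<le> -\<beta>*k1*(e1 t\<bullet>e1 t) - \<beta>*(e2 t\<bullet>e2 t) + (1/(\<beta>*k1) + q^2/\<beta>)*G^2"
      proof -
        have "norm g \<le> G" unfolding g_def G_def
        proof -
          have "norm (Ji *v dd t) \<le> norm (dd t) * NJi" by (rule NJi(2))
          also have "\<dots> \<le> \<bar>\<xi>d\<bar> * NJi" using H6 t NJi(1) by (intro mult_right_mono) auto
          finally show "norm (Ji *v dd t) \<le> NJi * \<bar>\<xi>d\<bar>" by (simp add: mult.commute)
        qed
        from Vdot_bound[OF beta k1_def k1 qc q0 this, of "e1 t" "e2 t"]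
        show ?thesis unfolding V'_def E1_def[symmetric] E2_def[symmetric] by (simp add: inner_commute)
      qed
      moreover have "-\<beta>*k1*(e1 t\<bullet>e1 t) - \<beta>*(e2 t\<bullet>e2 t) \<le> - Cd * Vf t"
      proof -
        have a: "0 \<le> e1 t \<bullet> e1 t" "0 \<le> e2 t \<bullet> e2 t" by simp_all
        have x1: "mn*(e1 t\<bullet>e1 t) \<le> k1*(e1 t\<bullet>e1 t)" unfolding mn_def by (intro mult_right_mono) auto
        have x2: "mn*(e2 t\<bullet>e2 t) \<le> 1*(e2 t\<bullet>e2 t)" unfolding mn_def by (intro mult_right_mono) auto
        have "\<beta>*mn*(e1 t\<bullet>e1 t) \<le> \<beta>*k1*(e1 t\<bullet>e1 t)" "\<beta>*mn*(e2 t\<bullet>e2 t) \<le> \<beta>*(e2 t\<bullet>e2 t)"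
          using mult_left_mono[OF x1, of \<beta>] mult_left_mono[OF x2, of \<beta>] beta by (simp_all add: mult.assoc)
        moreover have "Cd * Vf t \<le> \<beta>*mn*(e1 t \<bullet> e1 t + e2 t \<bullet> e2 t)"
        proof -
          have "Cd * Vf t \<le> Cd * (M * (e1 t \<bullet> e1 t + e2 t \<bullet> e2 t))" using upV Cd0 by (simp add: mult_left_mono)
          also have "\<dots> = \<beta>*mn*(e1 t \<bullet> e1 t + e2 t \<bullet> e2 t)" unfolding Cd_def using M0 by simp
          finally show ?thesis .
        qed
        ultimately show ?thesis by (simp add: algebra_simps)
      qed
      ultimately show ?thesis unfolding h0_def by (intro exI[of _ V']) auto
    qed
    have cmp: "Vf t \<le> Vf 0 * exp (- Cd * t) + h / Cd * (1 - exp (- Cd * t))" if "t \<ge> 0" "h \<ge> h0" for t h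
    proof -
      have "\<forall>t\<ge>0. \<exists>V'. (Vf has_real_derivative V') (at t within {0..}) \<and> V' \<le> - Cd * Vf t + h"
        using dV that(2) by force
      from comparison[OF Cd0 this that(1)] show ?thesis .
    qed
    have cmp0: "Vf t \<le> \<bar>Vf 0\<bar> + hm / Cd" if "t \<ge> 0" for t
    proof -
      have A: "Vf t \<le> Vf 0 * exp (- Cd * t) + hm / Cd * (1 - exp (- Cd * t))" using cmp[OF that hmh0] .
      have B: "Vf 0 * exp (- Cd * t) \<le> \<bar>Vf 0\<bar>"
      proof -
        have "exp (- Cd * t) \<le> 1" using Cd0 that by simp
        hence "\<bar>Vf 0\<bar> * exp (- Cd * t) \<le> \<bar>Vf 0\<bar>" by (simp add: mult_left_le)
        thus ?thesis by (smt (verit) exp_gt_zero mult_right_mono abs_ge_self)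
      qed
      have C: "hm / Cd * (1 - exp (- Cd * t)) \<le> hm / Cd"
        using hm0 Cd0 by (intro mult_left_le) auto
      show ?thesis using A B C by linarith
    qed
    have e2bound: "norm (d t - J *v F2 t) \<le> NJ * sqrt (V / m)" if "Vf t \<le> V" for t V
    proof -
      have "m * (e2 t \<bullet> e2 t) \<le> Vf t" using lowV[of t] m0 by (smt (verit) inner_ge_zero mult_left_mono)
      hence "e2 t \<bullet> e2 t \<le> V / m" using that m0 by (simp add: field_simps)
      hence "norm (e2 t) \<le> sqrt (V / m)" by (simp add: norm_eq_sqrt_inner)
      hence "norm (e2 t) * NJ \<le> sqrt (V / m) * NJ" using NJ(1) by (simp add: mult_right_mono)
      moreover have "norm (d t - J *v F2 t) \<le> norm (e2 t) * NJ" unfolding dtil norm_minus_cancel by (rule NJ(2))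
      ultimately show ?thesis by (simp add: mult.commute)
    qed
    have C1': "\<forall>t\<ge>0. \<exists>V'. (Vf has_real_derivative V') (at t within {0..}) \<and> V' \<le> - Cd * Vf t + hm"
      using dV hmh0 by force
    have C2': "\<forall>t\<ge>0. Vf t \<le> Vf 0 * exp (- Cd * t) + hm / Cd * (1 - exp (- Cd * t))"
      using cmp hmh0 by blast
    have C3': "\<forall>c. 0 < c \<and> c < 1 \<longrightarrow> (\<exists>T\<ge>0. \<forall>t\<ge>T. Vf t \<le> hm / (c * Cd))"
      using eventually_small[OF Cd0 hm0 _ _ C2'] by blast
    have C4': "\<exists>B. \<forall>t\<ge>0. norm (d t - J *v F2 t) \<le> B"
      using e2bound cmp0 by blast
    have C5': "\<forall>c. 0 < c \<and> c < 1 \<longrightarrow> (\<exists>T\<ge>0. \<forall>t\<ge>T.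
              norm (d t - J *v F2 t) \<le> LJ * sqrt (hm / (c * Cd * LQ)))"
    proof (intro allI impI)
      fix c :: real assume c: "0 < c \<and> c < 1"
      have "\<forall>t\<ge>0. Vf t \<le> Vf 0 * exp (- Cd * t) + h0 / Cd * (1 - exp (- Cd * t))"
        using cmp by blast
      from eventually_small[OF Cd0 h00 _ _ this] c obtain T where T: "T \<ge> 0" "\<forall>t\<ge>T. Vf t \<le> h0 / (c * Cd)"
        by blast
      have key: "NJ * sqrt (h0 / (c * Cd) / m) \<le> LJ * sqrt (hm / (c * Cd * LQ))"
      proof -
        have "NJ^2 * (h0 / (c * Cd) / m) \<le> LJ^2 * (hm / (c * Cd * LQ))"
        proof -
          have "NJ^2 / m \<le> LJ^2 * K / U"
          proof -
            have "NJ^2 / m = LJ^2 * (NJ^2 * U / (m * LJ^2)) / U" using LJ U0 m0 by (simp add: field_simps)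
            also have "\<dots> \<le> LJ^2 * K / U" unfolding K_def using LJ U0 by (intro divide_right_mono mult_left_mono) auto
            finally show ?thesis .
          qed
          also have "\<dots> \<le> LJ^2 * K / LQ" using LQ LJ K1 by (intro divide_left_mono) auto
          finally have "NJ^2 / m \<le> LJ^2 * K / LQ" .
          hence "NJ^2 / m * (h0 / (c * Cd)) \<le> LJ^2 * K / LQ * (h0 / (c * Cd))"
            using h00 c Cd0 by (intro mult_right_mono) auto
          thus ?thesis unfolding hm_def by (simp add: field_simps)
        qed
        hence "sqrt (NJ^2 * (h0 / (c * Cd) / m)) \<le> sqrt (LJ^2 * (hm / (c * Cd * LQ)))"
          by (rule real_sqrt_le_mono)
        moreover have "sqrt (NJ^2 * (h0 / (c * Cd) / m)) = NJ * sqrt (h0 / (c * Cd) / m)"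
          unfolding real_sqrt_mult using NJ(1) by simp
        moreover have "sqrt (LJ^2 * (hm / (c * Cd * LQ))) = LJ * sqrt (hm / (c * Cd * LQ))"
          unfolding real_sqrt_mult using LJ by simp
        ultimately show ?thesis by linarith
      qed
      show "\<exists>T\<ge>0. \<forall>t\<ge>T. norm (d t - J *v F2 t) \<le> LJ * sqrt (hm / (c * Cd * LQ))"
        using T e2bound key by (meson order_trans)
    qed
    show "let eps = (\<lambda>t. stack \<beta> (F1 t - w t) (F2 t - matrix_inv J *v d t));
           V = (\<lambda>t. eps t \<bullet> (Q2 *v eps t));
           dtil = (\<lambda>t. d t - J *v F2 t)
       in (\<forall>t\<ge>0. \<exists>V'. (V has_real_derivative V') (at t within {0..}) \<and> V' \<le> - Cd * V t + hm)
        \<and> (\<forall>t\<ge>0. V t \<le> V 0 * exp (- Cd * t) + hm / Cd * (1 - exp (- Cd * t)))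
        \<and> (\<forall>c. 0 < c \<and> c < 1 \<longrightarrow> (\<exists>T\<ge>0. \<forall>t\<ge>T. V t \<le> hm / (c * Cd)))
        \<and> (\<exists>B. \<forall>t\<ge>0. norm (dtil t) \<le> B)
        \<and> (\<forall>c. 0 < c \<and> c < 1 \<longrightarrow> (\<exists>T\<ge>0. \<forall>t\<ge>T.
              norm (dtil t) \<le> lambda_max J * sqrt (hm / (c * Cd * lambda_min Q2))))"
      unfolding Let_def Veq Vpt LJ_def[symmetric] LQ_def[symmetric]
      using C1' C2' C3' C4' C5' by blast
  qed
qed

end
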